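(* Let $V_0$ be a nonlocal vertex algebra such that every $V_0$-module is completely reducible. Regard $V=V_0[[\hbar]]$ as an $\hbar$-adic nonlocal vertex algebra. Then for every simple $V$-module $W$ there is a simple $V_0$-module $W_0$ such that $W\cong W_0[[\hbar]]$ as $V$-modules.
   Context: Let $\hbar$ be a formal variable. A $\mathbb{C}[[\hbar]]$-module is topologically free if it is of the form $W_0[[\hbar]]$ for a complex vector space $W_0$. An ordinary nonlocal vertex algebra $V_0$ (resp. a $V_0$-module $W_0$) makes $V_0[[\hbar]]$ an $\hbar$-adic nonlocal vertex algebra (resp. $W_0[[\hbar]]$ a module over it) by $\mathbb{C}[[\hbar]]$-linear extension. A module over an $\hbar$-adic nonlocal vertex algebra is by definition topologically free. For a $\mathbb{C}[[\hbar]]$-submodule $U$ of a topologically free module $W$, set $[U]=\{w\in W:\hbar^n w\in U\text{ for some }n\ge 1\}$ and let $\overline{U}$ be its $\hbar$-adic closure. Convention: a submodule of a module $W$ over an $\hbar$-adic nonlocal vertex algebra $V$ is a $\mathbb{C}[[\hbar]]$-submodule $W_1$ stable under all operators $u_n$ ($u\in V$) such that $\overline{W_1}=W_1$ and $[W_1]=W_1$; $W$ is simple if $W\ne 0$ and its only submodules are $0$ and $W$. A $V_0$-module is completely reducible if it is a direct sum of simple $V_0$-submodules (equivalently, every submodule has a complementary submodule). *)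

theory Defs
  imports Complex_Main "HOL-Library.Function_Algebras"
begin

(* Vertex operators are given by their modes: Y u n v = u_n v  (n :: int),
   i.e. Y(u,x)v = sum_n u_n v x^(-n-1). *)

definition lin_on :: "(complex \<Rightarrow> 'a::ab_group_add \<Rightarrow> 'a) \<Rightarrow> (complex \<Rightarrow> 'b::ab_group_add \<Rightarrow> 'b)
    \<Rightarrow> 'a set \<Rightarrow> ('a \<Rightarrow> 'b) \<Rightarrow> bool" where
  "lin_on s t A f \<longleftrightarrow> (\<forall>x\<in>A. \<forall>y\<in>A. \<forall>c. f (s c x + y) = t c (f x) + f y)"

(* coefficient of x0^a x2^b in (x0+x2)^l Y_M(u,x0+x2) Y_M(v,x2) w, the sum over j
   truncated at J (terms with j >= J vanish once v_(j-1-b) w = 0) *)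
definition wa_lhs :: "(complex \<Rightarrow> 'm::ab_group_add \<Rightarrow> 'm) \<Rightarrow> ('u \<Rightarrow> int \<Rightarrow> 'm \<Rightarrow> 'm)
    \<Rightarrow> 'u \<Rightarrow> 'u \<Rightarrow> 'm \<Rightarrow> nat \<Rightarrow> int \<Rightarrow> int \<Rightarrow> nat \<Rightarrow> 'm" where
  "wa_lhs sM YM u v w l a b J =
     (\<Sum>j<J. sM ((of_int (a + int j) :: complex) gchoose j)
               (YM u (int l - 1 - a - int j) (YM v (int j - 1 - b) w)))"

(* coefficient of x0^a x2^b in (x0+x2)^l Y_M(Y(u,x0)v,x2) w *)
definition wa_rhs :: "(complex \<Rightarrow> 'm::ab_group_add \<Rightarrow> 'm) \<Rightarrow> ('u \<Rightarrow> int \<Rightarrow> 'u \<Rightarrow> 'u)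
    \<Rightarrow> ('u \<Rightarrow> int \<Rightarrow> 'm \<Rightarrow> 'm) \<Rightarrow> 'u \<Rightarrow> 'u \<Rightarrow> 'm \<Rightarrow> nat \<Rightarrow> int \<Rightarrow> int \<Rightarrow> 'm" where
  "wa_rhs sM Y YM u v w l a b =
     (\<Sum>i\<le>l. sM (of_nat (l choose i))
               (YM (Y u (int l - int i - a - 1) v) (int i - b - 1) w))"

definition wassoc :: "(complex \<Rightarrow> 'm::ab_group_add \<Rightarrow> 'm) \<Rightarrow> ('u \<Rightarrow> int \<Rightarrow> 'u \<Rightarrow> 'u)
    \<Rightarrow> ('u \<Rightarrow> int \<Rightarrow> 'm \<Rightarrow> 'm) \<Rightarrow> 'm set \<Rightarrow> bool" where
  "wassoc sM Y YM M \<longleftrightarrow>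
     (\<forall>u v. \<forall>w\<in>M. \<exists>l::nat. \<forall>a b J.
        (\<forall>j\<ge>J. YM v (int j - 1 - b) w = 0) \<longrightarrow>
        wa_lhs sM YM u v w l a b J = wa_rhs sM Y YM u v w l a b)"

definition nlva :: "(complex \<Rightarrow> 'v::ab_group_add \<Rightarrow> 'v) \<Rightarrow> 'v \<Rightarrow> ('v \<Rightarrow> int \<Rightarrow> 'v \<Rightarrow> 'v) \<Rightarrow> bool" where
  "nlva sc vac Y \<longleftrightarrow>
     vector_space sc \<and>
     (\<forall>u n. lin_on sc sc UNIV (Y u n)) \<and>
     (\<forall>v n. lin_on sc sc UNIV (\<lambda>u. Y u n v)) \<and>
     (\<forall>u v. \<exists>N. \<forall>n\<ge>N. Y u n v = 0) \<and>
     (\<forall>n v. Y vac n v = (if n = -1 then v else 0)) \<and>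
     (\<forall>u. \<forall>n\<ge>0. Y u n vac = 0) \<and>
     (\<forall>u. Y u (-1) vac = u) \<and>
     wassoc sc Y Y UNIV"

definition nlva_module :: "(complex \<Rightarrow> 'v::ab_group_add \<Rightarrow> 'v) \<Rightarrow> 'v \<Rightarrow> ('v \<Rightarrow> int \<Rightarrow> 'v \<Rightarrow> 'v)
    \<Rightarrow> (complex \<Rightarrow> 'm::ab_group_add \<Rightarrow> 'm) \<Rightarrow> 'm set \<Rightarrow> ('v \<Rightarrow> int \<Rightarrow> 'm \<Rightarrow> 'm) \<Rightarrow> bool" where
  "nlva_module sc vac Y sM M YM \<longleftrightarrow>
     vector_space sM \<and> module.subspace sM M \<and>
     (\<forall>u n. \<forall>w\<in>M. YM u n w \<in> M) \<and>
     (\<forall>u n. lin_on sM sM M (YM u n)) \<and>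
     (\<forall>n. \<forall>w\<in>M. lin_on sc sM UNIV (\<lambda>u. YM u n w)) \<and>
     (\<forall>u. \<forall>w\<in>M. \<exists>N. \<forall>n\<ge>N. YM u n w = 0) \<and>
     (\<forall>n. \<forall>w\<in>M. YM vac n w = (if n = -1 then w else 0)) \<and>
     wassoc sM Y YM M"

definition vsubmod :: "(complex \<Rightarrow> 'm::ab_group_add \<Rightarrow> 'm) \<Rightarrow> 'm set \<Rightarrow> ('v \<Rightarrow> int \<Rightarrow> 'm \<Rightarrow> 'm)
    \<Rightarrow> 'm set \<Rightarrow> bool" where
  "vsubmod sM M YM N \<longleftrightarrow> N \<subseteq> M \<and> module.subspace sM N \<and> (\<forall>u n. \<forall>w\<in>N. YM u n w \<in> N)"

definition vsimple :: "(complex \<Rightarrow> 'm::ab_group_add \<Rightarrow> 'm) \<Rightarrow> 'm set \<Rightarrow> ('v \<Rightarrow> int \<Rightarrow> 'm \<Rightarrow> 'm) \<Rightarrow> bool" where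
  "vsimple sM M YM \<longleftrightarrow> M \<noteq> {0} \<and> (\<forall>N. vsubmod sM M YM N \<longrightarrow> N = {0} \<or> N = M)"

definition compl_red :: "(complex \<Rightarrow> 'm::ab_group_add \<Rightarrow> 'm) \<Rightarrow> 'm set \<Rightarrow> ('v \<Rightarrow> int \<Rightarrow> 'm \<Rightarrow> 'm) \<Rightarrow> bool" where
  "compl_red sM M YM \<longleftrightarrow>
     (\<forall>N. vsubmod sM M YM N \<longrightarrow>
        (\<exists>N'. vsubmod sM M YM N' \<and> N \<inter> N' = {0} \<and> (\<forall>w\<in>M. \<exists>x\<in>N. \<exists>y\<in>N'. w = x + y)))"

(* ---------- hbar-adic part: elements of X[[hbar]] are functions nat => X ---------- *)

definition pscale :: "(complex \<Rightarrow> 'a \<Rightarrow> 'a) \<Rightarrow> complex \<Rightarrow> (nat \<Rightarrow> 'a) \<Rightarrow> (nat \<Rightarrow> 'a)" where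
  "pscale s c x = (\<lambda>i. s c (x i))"

definition hmul :: "(complex \<Rightarrow> 'a::comm_monoid_add \<Rightarrow> 'a) \<Rightarrow> (nat \<Rightarrow> complex) \<Rightarrow> (nat \<Rightarrow> 'a) \<Rightarrow> (nat \<Rightarrow> 'a)" where
  "hmul s f x = (\<lambda>k. \<Sum>i\<le>k. s (f i) (x (k - i)))"

definition hlin :: "(complex \<Rightarrow> 'a::ab_group_add \<Rightarrow> 'a) \<Rightarrow> (complex \<Rightarrow> 'b::ab_group_add \<Rightarrow> 'b)
    \<Rightarrow> ((nat \<Rightarrow> 'a) \<Rightarrow> (nat \<Rightarrow> 'b)) \<Rightarrow> bool" where
  "hlin s t F \<longleftrightarrow> (\<forall>f x y. F (hmul s f x + y) = hmul t f (F x) + F y)"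

(* x \<in> hbar^k W *)
definition inhk :: "nat \<Rightarrow> (nat \<Rightarrow> 'a::zero) \<Rightarrow> bool" where
  "inhk k x \<longleftrightarrow> (\<forall>i<k. x i = 0)"

definition hpow :: "nat \<Rightarrow> (nat \<Rightarrow> 'a::zero) \<Rightarrow> (nat \<Rightarrow> 'a)" where
  "hpow n x = (\<lambda>i. if i < n then 0 else x (i - n))"

(* C[[hbar]]-linear extension of vertex operators: V0[[hbar]], W0[[hbar]] *)
definition hY :: "('a \<Rightarrow> int \<Rightarrow> 'c \<Rightarrow> 'd::comm_monoid_add) \<Rightarrow> (nat \<Rightarrow> 'a) \<Rightarrow> int \<Rightarrow> (nat \<Rightarrow> 'c) \<Rightarrow> (nat \<Rightarrow> 'd)" where
  "hY Y u n v = (\<lambda>k. \<Sum>i\<le>k. Y (u i) n (v (k - i)))"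

definition hvac :: "'v::zero \<Rightarrow> (nat \<Rightarrow> 'v)" where
  "hvac vac = (\<lambda>k. if k = 0 then vac else 0)"

(* module W = B[[hbar]] (topologically free) over the hbar-adic nonlocal vertex
   algebra V = V0[[hbar]] *)
definition hmodule :: "(complex \<Rightarrow> 'v::ab_group_add \<Rightarrow> 'v) \<Rightarrow> 'v \<Rightarrow> ('v \<Rightarrow> int \<Rightarrow> 'v \<Rightarrow> 'v)
    \<Rightarrow> (complex \<Rightarrow> 'b::ab_group_add \<Rightarrow> 'b)
    \<Rightarrow> ((nat \<Rightarrow> 'v) \<Rightarrow> int \<Rightarrow> (nat \<Rightarrow> 'b) \<Rightarrow> (nat \<Rightarrow> 'b)) \<Rightarrow> bool" where
  "hmodule sc vac Y sB YW \<longleftrightarrow>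
     vector_space sB \<and>
     (\<forall>u n. hlin sB sB (YW u n)) \<and>
     (\<forall>n w. hlin sc sB (\<lambda>u. YW u n w)) \<and>
     (\<forall>u w k. \<exists>N. \<forall>n\<ge>N. inhk k (YW u n w)) \<and>
     (\<forall>n w. YW (hvac vac) n w = (if n = -1 then w else 0)) \<and>
     (\<forall>u v w k. \<exists>l::nat. \<forall>a b J.
        (\<forall>j\<ge>J. inhk k (YW v (int j - 1 - b) w)) \<longrightarrow>
        inhk k (wa_lhs (pscale sB) YW u v w l a b J - wa_rhs (pscale sB) (hY Y) YW u v w l a b))"

definition hclosed :: "(nat \<Rightarrow> 'b::ab_group_add) set \<Rightarrow> bool" where
  "hclosed N \<longleftrightarrow> (\<forall>x. (\<forall>k. \<exists>y\<in>N. inhk k (x - y)) \<longrightarrow> x \<in> N)"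

definition hsat :: "(nat \<Rightarrow> 'b::zero) set \<Rightarrow> bool" where
  "hsat N \<longleftrightarrow> (\<forall>x n. n \<ge> 1 \<and> hpow n x \<in> N \<longrightarrow> x \<in> N)"

definition hsubmod :: "(complex \<Rightarrow> 'b::ab_group_add \<Rightarrow> 'b)
    \<Rightarrow> ((nat \<Rightarrow> 'v) \<Rightarrow> int \<Rightarrow> (nat \<Rightarrow> 'b) \<Rightarrow> (nat \<Rightarrow> 'b)) \<Rightarrow> (nat \<Rightarrow> 'b) set \<Rightarrow> bool" where
  "hsubmod sB YW N \<longleftrightarrow>
     0 \<in> N \<and> (\<forall>x\<in>N. \<forall>y\<in>N. x + y \<in> N) \<and> (\<forall>f. \<forall>x\<in>N. hmul sB f x \<in> N) \<and>
     (\<forall>u n. \<forall>x\<in>N. YW u n x \<in> N) \<and> hclosed N \<and> hsat N"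

definition hsimple :: "(complex \<Rightarrow> 'b::ab_group_add \<Rightarrow> 'b)
    \<Rightarrow> ((nat \<Rightarrow> 'v) \<Rightarrow> int \<Rightarrow> (nat \<Rightarrow> 'b) \<Rightarrow> (nat \<Rightarrow> 'b)) \<Rightarrow> bool" where
  "hsimple sB YW \<longleftrightarrow> (UNIV :: (nat \<Rightarrow> 'b) set) \<noteq> {0} \<and>
     (\<forall>N. hsubmod sB YW N \<longrightarrow> N = {0} \<or> N = UNIV)"

definition hiso :: "(complex \<Rightarrow> 'b::ab_group_add \<Rightarrow> 'b)
    \<Rightarrow> ((nat \<Rightarrow> 'v) \<Rightarrow> int \<Rightarrow> (nat \<Rightarrow> 'b) \<Rightarrow> (nat \<Rightarrow> 'b))
    \<Rightarrow> ((nat \<Rightarrow> 'v) \<Rightarrow> int \<Rightarrow> (nat \<Rightarrow> 'b) \<Rightarrow> (nat \<Rightarrow> 'b))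
    \<Rightarrow> ((nat \<Rightarrow> 'b) \<Rightarrow> (nat \<Rightarrow> 'b)) \<Rightarrow> bool" where
  "hiso sB YW YW' \<phi> \<longleftrightarrow> bij \<phi> \<and> hlin sB sB \<phi> \<and> (\<forall>u n w. \<phi> (YW u n w) = YW' u n (\<phi> w))"

end

theory Submission
  imports Defs
begin


lemma vs_module: "vector_space s \<Longrightarrow> module s"
  by (simp add: vector_space_def module_def)

lemma vs_simps:
  assumes "vector_space s"
  shows "s c 0 = 0" "s 0 x = 0" "s 1 x = x" "s c (x + y) = s c x + s c y"
        "s (a + b) x = s a x + s b x" "s c (- x) = - s c x" "s (-1) x = - x"
  using module.scale_zero_right[OF vs_module[OF assms]] module.scale_zero_left[OF vs_module[OF assms]]
    module.scale_one[OF vs_module[OF assms]] module.scale_right_distrib[OF vs_module[OF assms]]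
    module.scale_left_distrib[OF vs_module[OF assms]] module.scale_minus_right[OF vs_module[OF assms]]
    module.scale_minus_left[OF vs_module[OF assms]]
  by auto

lemma fsum_apply: "(sum f A) (i::nat) = (\<Sum>a\<in>A. f a i)"
  for f :: "'x \<Rightarrow> nat \<Rightarrow> 'a::comm_monoid_add"
  by (induct A rule: infinite_finite_induct) auto

lemma hpow1_0[simp]: "hpow (Suc 0) x 0 = 0" by (simp add: hpow_def)
lemma hpow1_Suc[simp]: "hpow (Suc 0) x (Suc i) = x i" by (simp add: hpow_def)
lemma hvac_0[simp]: "hvac a 0 = a" by (simp add: hvac_def)
lemma hvac_Suc[simp]: "hvac a (Suc i) = 0" by (simp add: hvac_def)
lemma hvac_zero[simp]: "hvac 0 = 0" by (rule ext) (simp add: hvac_def)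
lemma hvac_add: "hvac (a + b) = hvac a + (hvac b :: nat \<Rightarrow> 'a::monoid_add)" by (rule ext) (simp add: hvac_def)
lemma hvac_inj: "hvac a = hvac b \<Longrightarrow> a = b" by (metis hvac_0)

lemma decomp: "x = hvac (x 0) + hpow (Suc 0) (\<lambda>i. x (Suc i))" for x :: "nat \<Rightarrow> 'a::monoid_add"
  by (rule ext, case_tac xa) (simp_all add: hvac_def hpow_def)

lemma causal:
  fixes F :: "(nat \<Rightarrow> 'a::ab_group_add) \<Rightarrow> (nat \<Rightarrow> 'c::ab_group_add)"
  assumes "additive F" "\<And>x. F (hpow (Suc 0) x) = hpow (Suc 0) (F x)" "\<And>i. i \<le> k \<Longrightarrow> x i = y i"
  shows "F x k = F y k"
  using assms(3)
proof (induct k arbitrary: x y)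
  case 0
  have "F x = F (hvac (x 0)) + hpow (Suc 0) (F (\<lambda>i. x (Suc i)))"
    using arg_cong[where f=F, OF decomp[of x]] by (simp add: additive.add[OF assms(1)] assms(2))
  moreover have "F y = F (hvac (y 0)) + hpow (Suc 0) (F (\<lambda>i. y (Suc i)))"
    using arg_cong[where f=F, OF decomp[of y]] by (simp add: additive.add[OF assms(1)] assms(2))
  ultimately show ?case using 0 by simp
next
  case (Suc k)
  have "F x = F (hvac (x 0)) + hpow (Suc 0) (F (\<lambda>i. x (Suc i)))"
    using arg_cong[where f=F, OF decomp[of x]] by (simp add: additive.add[OF assms(1)] assms(2))
  moreover have "F y = F (hvac (y 0)) + hpow (Suc 0) (F (\<lambda>i. y (Suc i)))"
    using arg_cong[where f=F, OF decomp[of y]] by (simp add: additive.add[OF assms(1)] assms(2))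
  moreover have "F (\<lambda>i. x (Suc i)) k = F (\<lambda>i. y (Suc i)) k"
    by (rule Suc.hyps) (simp add: Suc.prems)
  ultimately show ?case using Suc.prems[of 0] by simp
qed

lemma density:
  fixes F G :: "(nat \<Rightarrow> 'a::ab_group_add) \<Rightarrow> (nat \<Rightarrow> 'c::ab_group_add)"
  assumes "additive F" "additive G" "\<And>x. F (hpow (Suc 0) x) = hpow (Suc 0) (F x)"
    "\<And>x. G (hpow (Suc 0) x) = hpow (Suc 0) (G x)" "\<And>a. F (hvac a) = G (hvac a)"
  shows "F = G"
proof (rule ext, rule ext)
  fix x k show "F x k = G x k"
  proof (induct k arbitrary: x)
    case 0
    have "F x = F (hvac (x 0)) + hpow (Suc 0) (F (\<lambda>i. x (Suc i)))"
      using arg_cong[where f=F, OF decomp[of x]] by (simp add: additive.add[OF assms(1)] assms(3))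
    moreover have "G x = G (hvac (x 0)) + hpow (Suc 0) (G (\<lambda>i. x (Suc i)))"
      using arg_cong[where f=G, OF decomp[of x]] by (simp add: additive.add[OF assms(2)] assms(4))
    ultimately show ?case using assms(5) by simp
  next
    case (Suc k)
    have "F x = F (hvac (x 0)) + hpow (Suc 0) (F (\<lambda>i. x (Suc i)))"
      using arg_cong[where f=F, OF decomp[of x]] by (simp add: additive.add[OF assms(1)] assms(3))
    moreover have "G x = G (hvac (x 0)) + hpow (Suc 0) (G (\<lambda>i. x (Suc i)))"
      using arg_cong[where f=G, OF decomp[of x]] by (simp add: additive.add[OF assms(2)] assms(4))
    ultimately show ?case using assms(5) Suc by simp
  qed
qed

definition conv :: "('a \<Rightarrow> 'b \<Rightarrow> 'c::comm_monoid_add) \<Rightarrow> (nat \<Rightarrow> 'a) \<Rightarrow> (nat \<Rightarrow> 'b) \<Rightarrow> nat \<Rightarrow> 'c" where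
  "conv B x y = (\<lambda>k. \<Sum>i\<le>k. B (x i) (y (k - i)))"

lemma hmul_conv: "hmul s f x = conv s f x" by (simp add: hmul_def conv_def)
lemma hY_conv: "hY Y u n v = conv (\<lambda>a. Y a n) u v" by (simp add: hY_def conv_def)

lemma conv_hvac_left:
  assumes "\<And>y. B 0 y = 0" shows "conv B (hvac a) y = (\<lambda>k. B a (y k))"
  by (rule ext, simp add: conv_def sum.atMost_shift assms)

lemma conv_hvac_right:
  assumes "\<And>x. B x 0 = 0" shows "conv B x (hvac b) = (\<lambda>k. B (x k) b)"
proof (rule ext)
  fix k
  have "(\<Sum>i\<le>k. B (x i) (hvac b (k - i))) = (\<Sum>i\<in>{k}. B (x i) (hvac b (k - i)))"
    by (rule sum.mono_neutral_right) (auto simp: hvac_def assms)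
  then show "conv B x (hvac b) k = B (x k) b" by (simp add: conv_def)
qed

lemma conv_hpow_left:
  assumes "\<And>y. B 0 y = 0" shows "conv B (hpow (Suc 0) x) y = hpow (Suc 0) (conv B x y)"
proof (rule ext)
  fix k show "conv B (hpow (Suc 0) x) y k = hpow (Suc 0) (conv B x y) k"
  proof (cases k)
    case 0 then show ?thesis by (simp add: conv_def assms)
  next
    case (Suc m)
    show ?thesis unfolding Suc conv_def
      by (simp only: sum.atMost_Suc_shift) (simp add: assms)
  qed
qed

lemma conv_hpow_right:
  assumes "\<And>x. B x 0 = 0" shows "conv B x (hpow (Suc 0) y) = hpow (Suc 0) (conv B x y)"
proof (rule ext)
  fix k show "conv B x (hpow (Suc 0) y) k = hpow (Suc 0) (conv B x y) k"
  proof (cases k)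
    case 0 then show ?thesis by (simp add: conv_def assms)
  next
    case (Suc m)
    have "(\<Sum>i\<le>Suc m. B (x i) (hpow (Suc 0) y (Suc m - i))) = (\<Sum>i\<le>m. B (x i) (hpow (Suc 0) y (Suc m - i)))"
      by (simp only: sum.atMost_Suc) (simp add: assms)
    also have "\<dots> = (\<Sum>i\<le>m. B (x i) (y (m - i)))"
      by (rule sum.cong) (auto simp: Suc_diff_le)
    then show ?thesis using Suc by (simp add: conv_def assms)
  qed
qed

lemma conv_add_left:
  assumes "\<And>a a' y. B (a + a') y = B a y + B a' y"
  shows "conv B (x + x') y = conv B x y + conv B x' y"
  by (rule ext) (simp add: conv_def assms sum.distrib)

lemma conv_add_right:
  assumes "\<And>a y y'. B a (y + y') = B a y + B a y'"
  shows "conv B x (y + y') = conv B x y + conv B x y'"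
  by (rule ext) (simp add: conv_def assms sum.distrib)




lemma pscale_apply[simp]: "pscale s c x i = s c (x i)" by (simp add: pscale_def)

lemma vs_scale: "vector_space s \<Longrightarrow> s a (s b x) = s (a * b) x"
  using module.scale_scale[OF vs_module] by blast

lemma vs_pscale: assumes "vector_space s" shows "vector_space (pscale s)"
  unfolding vector_space_def module_def pscale_def
  by (simp add: fun_eq_iff vs_simps[OF assms] vs_scale[OF assms])

lemma hmul_hvac: "vector_space s \<Longrightarrow> hmul s (hvac c) x = pscale s c x"
  unfolding hmul_conv by (rule ext) (simp add: conv_hvac_left vs_simps)

lemma hmul_one: "vector_space s \<Longrightarrow> hmul s (hvac 1) x = x"
  by (simp add: hmul_hvac vs_simps pscale_def)

lemma hmul_h: "vector_space s \<Longrightarrow> hmul s (hpow (Suc 0) (hvac 1)) x = hpow (Suc 0) x"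
  unfolding hmul_conv by (subst conv_hpow_left) (simp_all add: vs_simps hmul_one[unfolded hmul_conv])

lemma hmul_zero_f: "vector_space s \<Longrightarrow> hmul s 0 x = 0"
  by (rule ext) (simp add: hmul_def vs_simps)

lemma hlin_additive:
  assumes "vector_space s" "vector_space t" "hlin s t F" shows "additive F"
proof
  fix x y show "F (x + y) = F x + F y"
    using assms(3) unfolding hlin_def
    by (metis (no_types) hmul_one[OF assms(1)] hmul_one[OF assms(2)])
qed

lemma hlin_h:
  assumes "vector_space s" "vector_space t" "hlin s t F"
  shows "F (hpow (Suc 0) x) = hpow (Suc 0) (F x)"
proof -
  have "F (hmul s (hpow (Suc 0) (hvac 1)) x + 0) = hmul t (hpow (Suc 0) (hvac 1)) (F x) + F 0"
    using assms(3) unfolding hlin_def by blast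
  then show ?thesis using additive.zero[OF hlin_additive[OF assms]]
    by (simp add: hmul_h assms)
qed

lemma hlin_hmul:
  assumes "vector_space s" "vector_space t" "hlin s t F"
  shows "F (hmul s f x) = hmul t f (F x)"
proof -
  have "F (hmul s f x + 0) = hmul t f (F x) + F 0"
    using assms(3) unfolding hlin_def by blast
  then show ?thesis using additive.zero[OF hlin_additive[OF assms]] by simp
qed

lemma hlin_scale:
  assumes "vector_space s" "vector_space t" "hlin s t F"
  shows "F (pscale s c x) = pscale t c (F x)"
  using hlin_hmul[OF assms, of "hvac c" x] by (simp add: hmul_hvac assms)

lemma hlin_causal:
  assumes "vector_space s" "vector_space t" "hlin s t F" "\<And>i. i \<le> k \<Longrightarrow> x i = y i"
  shows "F x k = F y k"
  by (rule causal[OF hlin_additive[OF assms(1-3)] hlin_h[OF assms(1-3)] assms(4)])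

lemma lin_on_add:
  assumes "vector_space s" "vector_space t" "lin_on s t UNIV f"
  shows "additive f"
proof
  fix x y show "f (x + y) = f x + f y"
    using assms(3) unfolding lin_on_def by (metis (no_types) vs_simps(3)[OF assms(1)] vs_simps(3)[OF assms(2)] UNIV_I)
qed

lemma lin_on_scale:
  assumes "vector_space s" "vector_space t" "lin_on s t UNIV f"
  shows "f (s c x) = t c (f x)"
proof -
  have "f (s c x + 0) = t c (f x) + f 0" using assms(3) unfolding lin_on_def by blast
  then show ?thesis using additive.zero[OF lin_on_add[OF assms]] by simp
qed

lemma pscale_add: "vector_space s \<Longrightarrow> pscale s c (x + y) = pscale s c x + pscale s c y"
  by (rule ext) (simp add: vs_simps)

lemma hvac_scale: "vector_space s \<Longrightarrow> hvac (s c x) = pscale s c (hvac x)"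
  by (rule ext) (simp add: hvac_def vs_simps)




locale hset =
  fixes sc :: "complex \<Rightarrow> 'v::ab_group_add \<Rightarrow> 'v" and vac :: 'v
    and Y :: "'v \<Rightarrow> int \<Rightarrow> 'v \<Rightarrow> 'v"
    and sB :: "complex \<Rightarrow> 'b::ab_group_add \<Rightarrow> 'b"
    and YW :: "(nat \<Rightarrow> 'v) \<Rightarrow> int \<Rightarrow> (nat \<Rightarrow> 'b) \<Rightarrow> (nat \<Rightarrow> 'b)"
  assumes V0: "nlva sc vac Y" and W: "hmodule sc vac Y sB YW"
begin

lemma vsc: "vector_space sc" using V0 by (simp add: nlva_def)
lemma vsB: "vector_space sB" using W by (simp add: hmodule_def)
lemma vpB: "vector_space (pscale sB)" by (rule vs_pscale[OF vsB])

lemma hlin_w: "hlin sB sB (YW u n)" using W by (simp add: hmodule_def)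
lemma hlin_u: "hlin sc sB (\<lambda>u. YW u n w)" using W by (simp add: hmodule_def)

lemma add_w: "additive (YW u n)" by (rule hlin_additive[OF vsB vsB hlin_w])
lemma add_u: "additive (\<lambda>u. YW u n w)" by (rule hlin_additive[OF vsc vsB hlin_u])

lemma YW_add_w: "YW u n (x + y) = YW u n x + YW u n y" by (rule additive.add[OF add_w])
lemma YW_add_u: "YW (u + u') n w = YW u n w + YW u' n w"
  using additive.add[OF add_u, of u u'] by simp
lemma YW_zero_w[simp]: "YW u n 0 = 0" by (rule additive.zero[OF add_w])
lemma YW_zero_u[simp]: "YW 0 n w = 0" using additive.zero[OF add_u] by simp
lemma YW_diff_w: "YW u n (x - y) = YW u n x - YW u n y" by (rule additive.diff[OF add_w])
lemma YW_scale_w: "YW u n (pscale sB c x) = pscale sB c (YW u n x)"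
  by (rule hlin_scale[OF vsB vsB hlin_w])
lemma YW_scale_u: "YW (pscale sc c u) n w = pscale sB c (YW u n w)"
  using hlin_scale[OF vsc vsB hlin_u] by simp
lemma YW_h_w: "YW u n (hpow (Suc 0) x) = hpow (Suc 0) (YW u n x)"
  by (rule hlin_h[OF vsB vsB hlin_w])
lemma YW_h_u: "YW (hpow (Suc 0) u) n w = hpow (Suc 0) (YW u n w)"
  using hlin_h[OF vsc vsB hlin_u] by simp
lemma YW_hmul_w: "YW u n (hmul sB f x) = hmul sB f (YW u n x)"
  by (rule hlin_hmul[OF vsB vsB hlin_w])
lemma YW_causal_w: "(\<And>i. i \<le> k \<Longrightarrow> x i = y i) \<Longrightarrow> YW u n x k = YW u n y k"
  by (rule hlin_causal[OF vsB vsB hlin_w])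
lemma YW_causal_u: "(\<And>i. i \<le> k \<Longrightarrow> u i = u' i) \<Longrightarrow> YW u n w k = YW u' n w k"
  using hlin_causal[OF vsc vsB hlin_u, of k u u'] by simp

lemma Y_lin_w: "lin_on sc sc UNIV (Y u n)" using V0 by (simp add: nlva_def)
lemma Y_lin_u: "lin_on sc sc UNIV (\<lambda>u. Y u n v)" using V0 by (simp add: nlva_def)
lemma Y_zero_w[simp]: "Y u n 0 = 0" by (rule additive.zero[OF lin_on_add[OF vsc vsc Y_lin_w]])
lemma Y_zero_u[simp]: "Y 0 n v = 0" using additive.zero[OF lin_on_add[OF vsc vsc Y_lin_u]] by simp

lemma hY_hvac: "hY Y (hvac u) n (hvac v) = hvac (Y u n v)"
  unfolding hY_conv by (subst conv_hvac_left) (auto simp: hvac_def)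

definition tr :: "nat \<Rightarrow> (nat \<Rightarrow> 'b) \<Rightarrow> nat \<Rightarrow> 'b" where
  "tr k x = (\<lambda>i. if i < k then x i else 0)"
definition Mk :: "nat \<Rightarrow> (nat \<Rightarrow> 'b) set" where
  "Mk k = {x. \<forall>i\<ge>k. x i = 0}"
definition YMk :: "nat \<Rightarrow> 'v \<Rightarrow> int \<Rightarrow> (nat \<Rightarrow> 'b) \<Rightarrow> (nat \<Rightarrow> 'b)" where
  "YMk k u n x = tr k (YW (hvac u) n x)"
definition Y0 :: "'v \<Rightarrow> int \<Rightarrow> 'b \<Rightarrow> 'b" where
  "Y0 u n b = YW (hvac u) n (hvac b) 0"

lemma tr_add: "tr k (x + y) = tr k x + tr k y" by (rule ext) (simp add: tr_def)
lemma tr_additive: "additive (tr k)" by standard (rule tr_add)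
lemma tr_zero[simp]: "tr k 0 = 0" by (rule ext) (simp add: tr_def)
lemma tr_scale: "tr k (pscale sB c x) = pscale sB c (tr k x)"
  by (rule ext) (simp add: tr_def vs_simps[OF vsB])
lemma tr_Mk: "tr k x \<in> Mk k" by (simp add: tr_def Mk_def)
lemma tr_id: "x \<in> Mk k \<Longrightarrow> tr k x = x" by (rule ext) (simp add: tr_def Mk_def)
lemma tr_inhk: "inhk k z \<longleftrightarrow> tr k z = 0" by (auto simp: inhk_def tr_def fun_eq_iff)
lemma tr_tr: "j \<le> k \<Longrightarrow> tr j (tr k x) = tr j x" by (rule ext) (simp add: tr_def)
lemma tr_YW: "tr k (YW u n (tr k x)) = tr k (YW u n x)"
  by (rule ext) (auto simp: tr_def intro!: YW_causal_w)

lemma Y0_eq: "YW (hvac u) n x 0 = Y0 u n (x 0)"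
  unfolding Y0_def by (rule YW_causal_w) (simp add: hvac_def)

lemma YMk_hvac: "YMk (Suc 0) u n (hvac b) = hvac (Y0 u n b)"
  by (rule ext) (simp add: YMk_def tr_def hvac_def Y0_def)

lemma hvac_sc: "hvac (sc c u + u') = pscale sc c (hvac u) + hvac u'"
  by (simp add: hvac_add hvac_scale[OF vsc])

end



context hset begin

lemma W_assoc: "\<exists>l::nat. \<forall>a b J.
        (\<forall>j\<ge>J. inhk k (YW v (int j - 1 - b) w)) \<longrightarrow>
        inhk k (wa_lhs (pscale sB) YW u v w l a b J - wa_rhs (pscale sB) (hY Y) YW u v w l a b)"
  using W unfolding hmodule_def by blast

lemma W_trunc: "\<exists>N. \<forall>n\<ge>N. inhk k (YW u n w)"
  using W unfolding hmodule_def by blast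

lemma W_vac: "YW (hvac vac) n w = (if n = -1 then w else 0)"
  using W unfolding hmodule_def by blast

lemma Mk_subspace: "module.subspace (pscale sB) (Mk k)"
  unfolding module.subspace_def[OF vs_module[OF vpB]]
  by (simp add: Mk_def vs_simps[OF vsB])

lemma Mk_module: "nlva_module sc vac Y (pscale sB) (Mk k) (YMk k)"
  unfolding nlva_module_def
proof (intro conjI)
  show "vector_space (pscale sB)" by (rule vpB)
  show "module.subspace (pscale sB) (Mk k)" by (rule Mk_subspace)
  show "\<forall>u n. \<forall>w\<in>Mk k. YMk k u n w \<in> Mk k" by (simp add: YMk_def tr_Mk)
  show "\<forall>u n. lin_on (pscale sB) (pscale sB) (Mk k) (YMk k u n)"
    by (simp add: lin_on_def YMk_def YW_add_w YW_scale_w tr_add tr_scale)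
  show "\<forall>n. \<forall>w\<in>Mk k. lin_on sc (pscale sB) UNIV (\<lambda>u. YMk k u n w)"
    by (simp add: lin_on_def YMk_def hvac_sc YW_add_u YW_scale_u tr_add tr_scale)
  show "\<forall>u. \<forall>w\<in>Mk k. \<exists>N. \<forall>n\<ge>N. YMk k u n w = 0"
  proof (intro allI ballI)
    fix u w
    obtain N where "\<forall>n\<ge>N. inhk k (YW (hvac u) n w)" using W_trunc by blast
    then show "\<exists>N. \<forall>n\<ge>N. YMk k u n w = 0" by (auto simp: YMk_def tr_inhk)
  qed
  show "\<forall>n. \<forall>w\<in>Mk k. YMk k vac n w = (if n = -1 then w else 0)"
    by (simp add: YMk_def W_vac tr_id)
  show "wassoc (pscale sB) Y (YMk k) (Mk k)"
    unfolding wassoc_def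
  proof (intro allI ballI)
    fix u v w assume w: "w \<in> Mk k"
    obtain l where l: "\<forall>a b J.
        (\<forall>j\<ge>J. inhk k (YW (hvac v) (int j - 1 - b) w)) \<longrightarrow>
        inhk k (wa_lhs (pscale sB) YW (hvac u) (hvac v) w l a b J
               - wa_rhs (pscale sB) (hY Y) YW (hvac u) (hvac v) w l a b)"
      using W_assoc by blast
    show "\<exists>l. \<forall>a b J. (\<forall>j\<ge>J. YMk k v (int j - 1 - b) w = 0) \<longrightarrow>
        wa_lhs (pscale sB) (YMk k) u v w l a b J = wa_rhs (pscale sB) Y (YMk k) u v w l a b"
    proof (intro exI allI impI)
      fix a b J assume prem: "\<forall>j\<ge>J. YMk k v (int j - 1 - b) w = 0"
      have "inhk k (wa_lhs (pscale sB) YW (hvac u) (hvac v) w l a b J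
               - wa_rhs (pscale sB) (hY Y) YW (hvac u) (hvac v) w l a b)"
        using l prem by (simp add: tr_inhk YMk_def)
      then have eq: "tr k (wa_lhs (pscale sB) YW (hvac u) (hvac v) w l a b J)
          = tr k (wa_rhs (pscale sB) (hY Y) YW (hvac u) (hvac v) w l a b)"
        by (simp add: tr_inhk additive.diff[OF tr_additive])
      have lhs: "wa_lhs (pscale sB) (YMk k) u v w l a b J
          = tr k (wa_lhs (pscale sB) YW (hvac u) (hvac v) w l a b J)"
        by (simp add: wa_lhs_def YMk_def tr_YW additive.sum[OF tr_additive] tr_scale)
      have rhs: "wa_rhs (pscale sB) Y (YMk k) u v w l a b
          = tr k (wa_rhs (pscale sB) (hY Y) YW (hvac u) (hvac v) w l a b)"
        by (simp add: wa_rhs_def YMk_def hY_hvac additive.sum[OF tr_additive] tr_scale)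
      show "wa_lhs (pscale sB) (YMk k) u v w l a b J = wa_rhs (pscale sB) Y (YMk k) u v w l a b"
        using lhs rhs eq by simp
    qed
  qed
qed

lemma Y0_module: "nlva_module sc vac Y sB UNIV Y0"
  unfolding nlva_module_def
proof (intro conjI)
  show "vector_space sB" by (rule vsB)
  show "module.subspace sB UNIV" by (rule module.subspace_UNIV[OF vs_module[OF vsB]])
  show "\<forall>u n. \<forall>w\<in>UNIV. Y0 u n w \<in> UNIV" by simp
  show "\<forall>u n. lin_on sB sB UNIV (Y0 u n)"
    by (simp add: lin_on_def Y0_def hvac_add hvac_scale[OF vsB] YW_add_w YW_scale_w)
  show "\<forall>n. \<forall>w\<in>UNIV. lin_on sc sB UNIV (\<lambda>u. Y0 u n w)"
    by (simp add: lin_on_def Y0_def hvac_sc YW_add_u YW_scale_u)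
  show "\<forall>u. \<forall>w\<in>UNIV. \<exists>N. \<forall>n\<ge>N. Y0 u n w = 0"
  proof (intro allI ballI)
    fix u w
    obtain N where "\<forall>n\<ge>N. inhk (Suc 0) (YW (hvac u) n (hvac w))" using W_trunc by blast
    then show "\<exists>N. \<forall>n\<ge>N. Y0 u n w = 0" by (auto simp: Y0_def inhk_def)
  qed
  show "\<forall>n. \<forall>w\<in>UNIV. Y0 vac n w = (if n = -1 then w else 0)"
    by (simp add: Y0_def W_vac)
  show "wassoc sB Y Y0 UNIV"
    unfolding wassoc_def
  proof (intro allI ballI)
    fix u v w
    obtain l where l: "\<forall>a b J.
        (\<forall>j\<ge>J. inhk (Suc 0) (YW (hvac v) (int j - 1 - b) (hvac w))) \<longrightarrow>
        inhk (Suc 0) (wa_lhs (pscale sB) YW (hvac u) (hvac v) (hvac w) l a b J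
               - wa_rhs (pscale sB) (hY Y) YW (hvac u) (hvac v) (hvac w) l a b)"
      using W_assoc by blast
    show "\<exists>l. \<forall>a b J. (\<forall>j\<ge>J. Y0 v (int j - 1 - b) w = 0) \<longrightarrow>
        wa_lhs sB Y0 u v w l a b J = wa_rhs sB Y Y0 u v w l a b"
    proof (intro exI allI impI)
      fix a b J assume prem: "\<forall>j\<ge>J. Y0 v (int j - 1 - b) w = 0"
      have "inhk (Suc 0) (wa_lhs (pscale sB) YW (hvac u) (hvac v) (hvac w) l a b J
               - wa_rhs (pscale sB) (hY Y) YW (hvac u) (hvac v) (hvac w) l a b)"
        using l prem by (simp add: inhk_def Y0_def)
      then have eq: "wa_lhs (pscale sB) YW (hvac u) (hvac v) (hvac w) l a b J 0
          = wa_rhs (pscale sB) (hY Y) YW (hvac u) (hvac v) (hvac w) l a b 0"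
        by (simp add: inhk_def)
      have lhs: "wa_lhs sB Y0 u v w l a b J
          = wa_lhs (pscale sB) YW (hvac u) (hvac v) (hvac w) l a b J 0"
        by (simp add: wa_lhs_def fsum_apply Y0_eq)
      have rhs: "wa_rhs sB Y Y0 u v w l a b
          = wa_rhs (pscale sB) (hY Y) YW (hvac u) (hvac v) (hvac w) l a b 0"
        by (simp add: wa_rhs_def fsum_apply Y0_eq hY_hvac)
      show "wa_lhs sB Y0 u v w l a b J = wa_rhs sB Y Y0 u v w l a b"
        using lhs rhs eq by simp
    qed
  qed
qed

end



lemma lin_on_mono: "lin_on s t M f \<Longrightarrow> N \<subseteq> M \<Longrightarrow> lin_on s t N f"
  unfolding lin_on_def by blast

lemma sub_module:
  assumes "nlva_module sc vac Y sM M YM" "vsubmod sM M YM N"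
  shows "nlva_module sc vac Y sM N YM"
  using assms unfolding nlva_module_def vsubmod_def wassoc_def lin_on_def
  by (meson subsetD)

context hset begin

lemma mP: "module (pscale sB)" by (rule vs_module[OF vpB])

definition goodsec :: "nat \<Rightarrow> ('b \<Rightarrow> nat \<Rightarrow> 'b) \<Rightarrow> bool" where
 "goodsec k g \<longleftrightarrow> (\<forall>b. g b \<in> Mk k) \<and> (\<forall>b. g b 0 = b) \<and>
    (\<forall>c x y. g (sB c x + y) = pscale sB c (g x) + g y) \<and> (\<forall>u n b. YMk k u n (g b) = g (Y0 u n b))"

lemma good_base: "goodsec (Suc 0) hvac"
  unfolding goodsec_def
proof (intro conjI allI)
  fix b show "hvac b \<in> Mk (Suc 0)" by (auto simp: Mk_def hvac_def)
qed (simp_all add: YMk_hvac hvac_add hvac_scale[OF vsB])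

lemma trYMk: "tr k (YMk (Suc k) u n x) = YMk k u n (tr k x)"
  by (simp add: YMk_def tr_tr tr_YW)

lemma lift:
  assumes cr: "\<forall>(M :: (nat \<Rightarrow> 'b) set) YM. nlva_module sc vac Y (pscale sB) M YM
               \<longrightarrow> compl_red (pscale sB) M YM"
    and g: "goodsec k g" and k: "k \<ge> 1"
  shows "\<exists>g'. goodsec (Suc k) g' \<and> (\<forall>b. tr k (g' b) = g b)"
proof -
  have gM: "\<And>b. g b \<in> Mk k" and g0: "\<And>b. g b 0 = b"
    and glin: "\<And>c x y. g (sB c x + y) = pscale sB c (g x) + g y"
    and geq: "\<And>u n b. YMk k u n (g b) = g (Y0 u n b)" using g by (auto simp: goodsec_def)
  have gz: "g 0 = 0"
  proof -
    have "g (sB 1 0 + 0) = pscale sB 1 (g 0) + g 0" by (rule glin)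
    then show ?thesis by (simp add: vs_simps[OF vsB] pscale_def)
  qed
  have gadd: "g (x + y) = g x + g y" for x y
    using glin[of 1 x y] by (simp add: vs_simps[OF vsB] pscale_def)
  have gsc: "g (sB c x) = pscale sB c (g x)" for c x
    using glin[of c x 0] gz by simp
  define P where "P = {x \<in> Mk (Suc k). tr k x \<in> range g}"
  define K where "K = {x \<in> Mk (Suc k). tr k x = 0}"
  have MkS: "module.subspace (pscale sB) (Mk (Suc k))" by (rule Mk_subspace)
  have Psub: "module.subspace (pscale sB) P"
    unfolding module.subspace_def[OF mP]
  proof (intro conjI ballI allI)
    show "0 \<in> P" unfolding P_def using module.subspace_0[OF mP MkS] gz
      by (simp add: image_iff) (metis)
  next
    fix x y assume "x \<in> P" "y \<in> P"
    then obtain a b where "x \<in> Mk (Suc k)" "y \<in> Mk (Suc k)" "tr k x = g a" "tr k y = g b"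
      unfolding P_def by auto
    then show "x + y \<in> P" unfolding P_def
      using module.subspace_add[OF mP MkS] by (simp add: tr_add gadd[symmetric])
  next
    fix c x assume "x \<in> P"
    then obtain a where "x \<in> Mk (Suc k)" "tr k x = g a"
      unfolding P_def by auto
    then show "pscale sB c x \<in> P" unfolding P_def
      using module.subspace_scale[OF mP MkS] by (simp add: tr_scale gsc[symmetric])
  qed
  have Pvs: "vsubmod (pscale sB) (Mk (Suc k)) (YMk (Suc k)) P"
    unfolding vsubmod_def
  proof (intro conjI Psub allI ballI)
    show "P \<subseteq> Mk (Suc k)" unfolding P_def by auto
  next
    fix u n x assume "x \<in> P"
    then obtain b where "tr k x = g b" unfolding P_def by auto
    then have "tr k (YMk (Suc k) u n x) = g (Y0 u n b)" by (simp add: trYMk geq)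
    moreover have "YMk (Suc k) u n x \<in> Mk (Suc k)" by (simp add: YMk_def tr_Mk)
    ultimately show "YMk (Suc k) u n x \<in> P" unfolding P_def by auto
  qed
  have Pmod: "nlva_module sc vac Y (pscale sB) P (YMk (Suc k))"
    by (rule sub_module[OF Mk_module Pvs])
  have crP: "compl_red (pscale sB) P (YMk (Suc k))" using cr Pmod by blast
  have Ksub: "module.subspace (pscale sB) K"
    unfolding module.subspace_def[OF mP] K_def
    using module.subspace_0[OF mP MkS] module.subspace_add[OF mP MkS] module.subspace_scale[OF mP MkS]
    by (simp add: tr_add tr_scale module.scale_zero_right[OF mP])
  have Kvs: "vsubmod (pscale sB) P (YMk (Suc k)) K"
    unfolding vsubmod_def
  proof (intro conjI Ksub allI ballI)
    show "K \<subseteq> P" unfolding K_def P_def using gz by (auto simp: image_iff)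
  next
    fix u n x assume "x \<in> K"
    then have "tr k (YMk (Suc k) u n x) = 0" unfolding K_def by (simp add: trYMk, simp add: YMk_def)
    moreover have "YMk (Suc k) u n x \<in> Mk (Suc k)" by (simp add: YMk_def tr_Mk)
    ultimately show "YMk (Suc k) u n x \<in> K" unfolding K_def by auto
  qed
  obtain C where Cvs: "vsubmod (pscale sB) P (YMk (Suc k)) C" and KC: "K \<inter> C = {0}"
    and dec: "\<forall>w\<in>P. \<exists>x\<in>K. \<exists>y\<in>C. w = x + y"
    using crP[unfolded compl_red_def, rule_format, OF Kvs] by blast
  have CP: "C \<subseteq> P" and Csub: "module.subspace (pscale sB) C"
    and Cst: "\<And>u n x. x \<in> C \<Longrightarrow> YMk (Suc k) u n x \<in> C"
    using Cvs unfolding vsubmod_def by blast+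
  have CM: "C \<subseteq> Mk (Suc k)" using CP unfolding P_def by auto
  have ex1: "\<exists>!c. c \<in> C \<and> tr k c = g b" for b
  proof (rule ex_ex1I)
    have "g b \<in> P" unfolding P_def using gM[of b]
      by (auto simp: tr_id Mk_def)
    then obtain x y where "x \<in> K" "y \<in> C" "g b = x + y" using dec by blast
    then have "tr k y = g b" using tr_add[of k x y] tr_id[OF gM[of b]] unfolding K_def by auto
    then show "\<exists>c. c \<in> C \<and> tr k c = g b" using \<open>y \<in> C\<close> by blast
  next
    fix c1 c2 assume a: "c1 \<in> C \<and> tr k c1 = g b" "c2 \<in> C \<and> tr k c2 = g b"
    have "c1 - c2 \<in> C" using module.subspace_diff[OF mP Csub] a by blast
    moreover have "c1 - c2 \<in> K" unfolding K_def
      using module.subspace_diff[OF mP MkS] a CM additive.diff[OF tr_additive, of k c1 c2] by auto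
    ultimately have "c1 - c2 = 0" using KC by blast
    then show "c1 = c2" by simp
  qed
  define g' where "g' b = (THE c. c \<in> C \<and> tr k c = g b)" for b
  have g'P: "g' b \<in> C \<and> tr k (g' b) = g b" for b
    unfolding g'_def by (rule theI'[OF ex1])
  have g'eq: "c \<in> C \<Longrightarrow> tr k c = g b \<Longrightarrow> g' b = c" for b c
    unfolding g'_def by (rule the1_equality[OF ex1]) auto
  have "goodsec (Suc k) g'"
    unfolding goodsec_def
  proof (intro conjI allI)
    fix b show "g' b \<in> Mk (Suc k)" using g'P CM by blast
  next
    fix b have "g' b 0 = tr k (g' b) 0" using k by (simp add: tr_def)
    then show "g' b 0 = b" using g'P g0 by simp
  next
    fix c x y
    show "g' (sB c x + y) = pscale sB c (g' x) + g' y"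
    proof (rule g'eq)
      show "pscale sB c (g' x) + g' y \<in> C"
        using module.subspace_add[OF mP Csub] module.subspace_scale[OF mP Csub] g'P by blast
      show "tr k (pscale sB c (g' x) + g' y) = g (sB c x + y)"
        using g'P by (simp add: tr_add tr_scale glin)
    qed
  next
    fix u n b
    show "YMk (Suc k) u n (g' b) = g' (Y0 u n b)"
    proof (rule g'eq[symmetric])
      show "YMk (Suc k) u n (g' b) \<in> C" using Cst g'P by blast
      show "tr k (YMk (Suc k) u n (g' b)) = g (Y0 u n b)"
        using g'P by (simp add: trYMk geq)
    qed
  qed
  then show ?thesis using g'P by blast
qed

end



fun pre :: "('b \<Rightarrow> nat \<Rightarrow> 'b::ab_group_add) \<Rightarrow> (nat \<Rightarrow> 'b) \<Rightarrow> nat \<Rightarrow> 'b" where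
  "pre s w k = w k - sum_list (map (\<lambda>j. s (pre s w j) (k - j)) [0..<k])"

declare pre.simps[simp del]

lemma pre_eq: "pre s w k = w k - (\<Sum>j<k. s (pre s w j) (k - j))"
  by (subst pre.simps) (simp add: sum_set_upt_conv_sum_list_nat[symmetric] atLeast0LessThan)

lemma hpow_Suc: "hpow (Suc n) x = hpow (Suc 0) (hpow n x)"
  by (rule ext, case_tac xa) (simp_all add: hpow_def)

lemma hpow_0[simp]: "hpow 0 x = x" by (rule ext) (simp add: hpow_def)

lemma hlin_hpow:
  assumes "vector_space s" "vector_space t" "hlin s t F"
  shows "F (hpow n x) = hpow n (F x)"
proof (induct n)
  case 0
  then show ?case by simp
next
  case (Suc n)
  have "F (hpow (Suc n) x) = F (hpow (Suc 0) (hpow n x))" by (simp only: hpow_Suc[of n])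
  also have "\<dots> = hpow (Suc 0) (F (hpow n x))" by (rule hlin_h[OF assms])
  also have "\<dots> = hpow (Suc 0) (hpow n (F x))" using Suc by (rule arg_cong)
  also have "\<dots> = hpow (Suc n) (F x)" by (simp only: hpow_Suc[of n])
  finally show ?case .
qed

locale hset2 = hset +
  assumes cr: "\<forall>(M :: (nat \<Rightarrow> 'b) set) YM. nlva_module sc vac Y (pscale sB) M YM
               \<longrightarrow> compl_red (pscale sB) M YM"
begin

definition sq :: "nat \<Rightarrow> 'b \<Rightarrow> nat \<Rightarrow> 'b" where
  "sq = rec_nat hvac (\<lambda>k g. SOME g'. goodsec (Suc (Suc k)) g' \<and> (\<forall>b. tr (Suc k) (g' b) = g b))"

lemma sq_0: "sq 0 = hvac" by (simp add: sq_def)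
lemma sq_Suc: "sq (Suc k) = (SOME g'. goodsec (Suc (Suc k)) g' \<and> (\<forall>b. tr (Suc k) (g' b) = sq k b))"
  by (simp add: sq_def)

lemma sq_good: "goodsec (Suc k) (sq k) \<and> (\<forall>b. tr (Suc k) (sq (Suc k) b) = sq k b)"
proof (induct k)
  case 0
  have ex: "\<exists>g'. goodsec (Suc (Suc 0)) g' \<and> (\<forall>b. tr (Suc 0) (g' b) = sq 0 b)"
    using lift[OF cr, of "Suc 0" "sq 0"] good_base by (simp add: sq_0)
  show ?case using someI_ex[OF ex] good_base by (simp add: sq_Suc sq_0)
next
  case (Suc k)
  have g: "goodsec (Suc (Suc k)) (sq (Suc k))"
    using Suc someI_ex[OF lift[OF cr, of "Suc k" "sq k"]] by (simp add: sq_Suc)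
  have ex: "\<exists>g'. goodsec (Suc (Suc (Suc k))) g' \<and> (\<forall>b. tr (Suc (Suc k)) (g' b) = sq (Suc k) b)"
    using lift[OF cr g] by simp
  show ?case using someI_ex[OF ex] g by (simp add: sq_Suc[of "Suc k"])
qed

lemma sq_stable: "i \<le> m \<Longrightarrow> sq m b i = sq i b i"
proof (induct m)
  case 0 then show ?case by simp
next
  case (Suc m)
  show ?case
  proof (cases "i = Suc m")
    case False
    then have "i \<le> m" using Suc by simp
    have "sq (Suc m) b i = tr (Suc m) (sq (Suc m) b) i" using \<open>i \<le> m\<close> by (simp add: tr_def)
    also have "\<dots> = sq m b i" using sq_good by simp
    finally show ?thesis using Suc \<open>i \<le> m\<close> by simp
  qed simp
qed

definition sec :: "'b \<Rightarrow> nat \<Rightarrow> 'b" where "sec b = (\<lambda>i. sq i b i)"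

lemma tr_sec: "tr (Suc k) (sec b) = sq k b"
proof (rule ext)
  fix i
  have "sq k b \<in> Mk (Suc k)" using sq_good unfolding goodsec_def by blast
  then show "tr (Suc k) (sec b) i = sq k b i"
  proof (cases "i < Suc k")
    case True then show ?thesis using sq_stable[of i k b] by (simp add: tr_def sec_def)
  next
    case False then show ?thesis using \<open>sq k b \<in> Mk (Suc k)\<close> by (simp add: tr_def Mk_def)
  qed
qed

lemma sec_0: "sec b 0 = b"
  using sq_good[of 0] unfolding goodsec_def sec_def by simp

lemma sec_lin: "sec (sB c x + y) = pscale sB c (sec x) + sec y"
proof (rule ext)
  fix i show "sec (sB c x + y) i = (pscale sB c (sec x) + sec y) i"
    using sq_good[of i] unfolding goodsec_def sec_def by simp
qed

lemma sec_zero[simp]: "sec 0 = 0"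
  using sec_lin[of 1 0 0] by (simp add: vs_simps[OF vsB] pscale_def)
lemma sec_add: "sec (x + y) = sec x + sec y"
  using sec_lin[of 1 x y] by (simp add: vs_simps[OF vsB] pscale_def)
lemma sec_scale: "sec (sB c x) = pscale sB c (sec x)"
  using sec_lin[of c x 0] by simp

lemma sec_eq: "YW (hvac u) n (sec b) = sec (Y0 u n b)"
proof (rule ext)
  fix i
  have "YW (hvac u) n (sec b) i = tr (Suc i) (YW (hvac u) n (sec b)) i" by (simp add: tr_def)
  also have "\<dots> = tr (Suc i) (YW (hvac u) n (tr (Suc i) (sec b))) i" by (simp add: tr_YW)
  also have "\<dots> = YMk (Suc i) u n (sq i b) i" by (simp add: tr_sec YMk_def)
  also have "\<dots> = sq i (Y0 u n b) i" using sq_good[of i] unfolding goodsec_def by simp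
  finally show "YW (hvac u) n (sec b) i = sec (Y0 u n b) i" by (simp add: sec_def)
qed

definition psi :: "(nat \<Rightarrow> 'b) \<Rightarrow> nat \<Rightarrow> 'b" where
  "psi c = (\<lambda>k. \<Sum>j\<le>k. sec (c j) (k - j))"

lemma psi_add: "psi (x + y) = psi x + psi y"
  by (rule ext) (simp add: psi_def sec_add sum.distrib)

lemma psi_additive: "additive psi" by standard (rule psi_add)

lemma psi_h: "psi (hpow (Suc 0) c) = hpow (Suc 0) (psi c)"
proof (rule ext)
  fix k show "psi (hpow (Suc 0) c) k = hpow (Suc 0) (psi c) k"
  proof (cases k)
    case 0 then show ?thesis by (simp add: psi_def)
  next
    case (Suc m)
    show ?thesis unfolding Suc psi_def
      by (simp only: sum.atMost_Suc_shift) simp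
  qed
qed

lemma psi_hvac: "psi (hvac b) = sec b"
  by (rule ext) (simp add: psi_def sum.atMost_shift)

lemma psi_scale: "psi (pscale sB c x) = pscale sB c (psi x)"
  by (rule ext) (simp add: psi_def sec_scale module.scale_sum_right[OF vs_module[OF vsB]])

lemma hmul_add_x: "hmul sB f (x + y) = hmul sB f x + hmul sB f y"
  unfolding hmul_conv by (rule conv_add_right) (simp add: vs_simps[OF vsB])
lemma hmul_h_x: "hmul sB f (hpow (Suc 0) x) = hpow (Suc 0) (hmul sB f x)"
  unfolding hmul_conv by (rule conv_hpow_right) (simp add: vs_simps[OF vsB])
lemma hmul_add_f: "hmul sB (f + g) x = hmul sB f x + hmul sB g x"
  unfolding hmul_conv by (rule conv_add_left) (simp add: vs_simps[OF vsB])
lemma hmul_h_f: "hmul sB (hpow (Suc 0) f) x = hpow (Suc 0) (hmul sB f x)"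
  unfolding hmul_conv by (rule conv_hpow_left) (simp add: vs_simps[OF vsB])

lemma psi_hmul: "psi (hmul sB f x) = hmul sB f (psi x)"
proof -
  have base: "psi (hmul sB f (hvac b)) = hmul sB f (sec b)" for b
  proof -
    have "(\<lambda>f. psi (hmul sB f (hvac b))) = (\<lambda>f. hmul sB f (sec b))"
    proof (rule density)
      show "additive (\<lambda>f. psi (hmul sB f (hvac b)))"
        by standard (simp add: hmul_add_f psi_add)
      show "additive (\<lambda>f. hmul sB f (sec b))"
        by standard (simp add: hmul_add_f)
      show "psi (hmul sB (hpow (Suc 0) f) (hvac b)) = hpow (Suc 0) (psi (hmul sB f (hvac b)))" for f
        by (simp add: hmul_h_f psi_h)
      show "hmul sB (hpow (Suc 0) f) (sec b) = hpow (Suc 0) (hmul sB f (sec b))" for f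
        by (simp add: hmul_h_f)
      show "psi (hmul sB (hvac c) (hvac b)) = hmul sB (hvac c) (sec b)" for c
        by (simp add: hmul_hvac[OF vsB] hvac_scale[OF vsB, symmetric] psi_hvac sec_scale)
    qed
    then show ?thesis by (rule fun_cong)
  qed
  have "(\<lambda>x. psi (hmul sB f x)) = (\<lambda>x. hmul sB f (psi x))"
  proof (rule density)
    show "additive (\<lambda>x. psi (hmul sB f x))" by standard (simp add: hmul_add_x psi_add)
    show "additive (\<lambda>x. hmul sB f (psi x))" by standard (simp add: hmul_add_x psi_add)
    show "psi (hmul sB f (hpow (Suc 0) x)) = hpow (Suc 0) (psi (hmul sB f x))" for x
      by (simp add: hmul_h_x psi_h)
    show "hmul sB f (psi (hpow (Suc 0) x)) = hpow (Suc 0) (hmul sB f (psi x))" for x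
      by (simp add: hmul_h_x psi_h)
    show "psi (hmul sB f (hvac b)) = hmul sB f (psi (hvac b))" for b
      by (simp add: base psi_hvac)
  qed
  then show ?thesis by (rule fun_cong)
qed

lemma psi_hlin: "hlin sB sB psi"
  unfolding hlin_def by (simp add: psi_add psi_hmul)

lemma Y0_add_w: "Y0 u n (x + y) = Y0 u n x + Y0 u n y"
  by (simp add: Y0_def hvac_add YW_add_w)
lemma Y0_add_u: "Y0 (u + u') n x = Y0 u n x + Y0 u' n x"
  by (simp add: Y0_def hvac_add YW_add_u)
lemma Y0_zero_w[simp]: "Y0 u n 0 = 0" by (simp add: Y0_def)
lemma Y0_zero_u[simp]: "Y0 0 n x = 0" by (simp add: Y0_def)

lemma hY0_add_c: "hY Y0 u n (x + y) = hY Y0 u n x + hY Y0 u n y"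
  unfolding hY_conv by (rule conv_add_right) (simp add: Y0_add_w)
lemma hY0_h_c: "hY Y0 u n (hpow (Suc 0) x) = hpow (Suc 0) (hY Y0 u n x)"
  unfolding hY_conv by (rule conv_hpow_right) simp
lemma hY0_add_u: "hY Y0 (u + u') n x = hY Y0 u n x + hY Y0 u' n x"
  unfolding hY_conv by (rule conv_add_left) (simp add: Y0_add_u)
lemma hY0_h_u: "hY Y0 (hpow (Suc 0) u) n x = hpow (Suc 0) (hY Y0 u n x)"
  unfolding hY_conv by (rule conv_hpow_left) simp
lemma hY0_hvac: "hY Y0 (hvac a) n (hvac b) = hvac (Y0 a n b)"
  unfolding hY_conv by (subst conv_hvac_left) (auto simp: hvac_def)

lemma psi_Y: "psi (hY Y0 u n c) = YW u n (psi c)"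
proof -
  have base: "psi (hY Y0 u n (hvac b)) = YW u n (sec b)" for u b
  proof -
    have "(\<lambda>u. psi (hY Y0 u n (hvac b))) = (\<lambda>u. YW u n (sec b))"
    proof (rule density)
      show "additive (\<lambda>u. psi (hY Y0 u n (hvac b)))" by standard (simp add: hY0_add_u psi_add)
      show "additive (\<lambda>u. YW u n (sec b))" by standard (simp add: YW_add_u)
      show "psi (hY Y0 (hpow (Suc 0) u) n (hvac b)) = hpow (Suc 0) (psi (hY Y0 u n (hvac b)))" for u
        by (simp add: hY0_h_u psi_h)
      show "YW (hpow (Suc 0) u) n (sec b) = hpow (Suc 0) (YW u n (sec b))" for u
        by (simp add: YW_h_u)
      show "psi (hY Y0 (hvac a) n (hvac b)) = YW (hvac a) n (sec b)" for a
        by (simp add: hY0_hvac psi_hvac sec_eq)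
    qed
    then show ?thesis by (rule fun_cong)
  qed
  have "(\<lambda>c. psi (hY Y0 u n c)) = (\<lambda>c. YW u n (psi c))"
  proof (rule density)
    show "additive (\<lambda>c. psi (hY Y0 u n c))" by standard (simp add: hY0_add_c psi_add)
    show "additive (\<lambda>c. YW u n (psi c))" by standard (simp add: YW_add_w psi_add)
    show "psi (hY Y0 u n (hpow (Suc 0) c)) = hpow (Suc 0) (psi (hY Y0 u n c))" for c
      by (simp add: hY0_h_c psi_h)
    show "YW u n (psi (hpow (Suc 0) c)) = hpow (Suc 0) (YW u n (psi c))" for c
      by (simp add: YW_h_w psi_h)
    show "psi (hY Y0 u n (hvac b)) = YW u n (psi (hvac b))" for b
      by (simp add: base psi_hvac)
  qed
  then show ?thesis by (rule fun_cong)
qed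

lemma psi_split: "psi c k = c k + (\<Sum>j<k. sec (c j) (k - j))"
proof -
  have "psi c k = (\<Sum>j<Suc k. sec (c j) (k - j))" by (simp add: psi_def lessThan_Suc_atMost)
  also have "\<dots> = (\<Sum>j<k. sec (c j) (k - j)) + c k" by (simp add: sec_0)
  finally show ?thesis by (simp add: add.commute)
qed

lemma psi_inj0: "psi x = 0 \<Longrightarrow> x = 0"
proof (rule ext)
  fix k assume p: "psi x = 0"
  show "x k = 0 k"
  proof (induct k rule: less_induct)
    case (less k)
    then have "(\<Sum>j<k. sec (x j) (k - j)) = 0" by simp
    then show ?case using psi_split[of x k] p by simp
  qed
qed

lemma psi_inj: "inj psi"
proof (rule injI)
  fix x y assume "psi x = psi y"
  then have "psi (x - y) = 0" by (simp add: additive.diff[OF psi_additive])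
  then have "x - y = 0" by (rule psi_inj0)
  then show "x = y" by simp
qed

lemma psi_surj: "surj psi"
proof -
  have "psi (pre sec w) = w" for w
  proof (rule ext)
    fix k show "psi (pre sec w) k = w k"
      using psi_split[of "pre sec w" k] pre_eq[of sec w k] by simp
  qed
  then show ?thesis by (metis surjI)
qed

lemma psi_bij: "bij psi" using psi_inj psi_surj by (simp add: bij_def)

end



context hset2 begin

definition phi where "phi = inv psi"
lemma phi_psi[simp]: "phi (psi c) = c" unfolding phi_def by (rule inv_f_f[OF psi_inj])
lemma psi_phi[simp]: "psi (phi w) = w" unfolding phi_def by (rule surj_f_inv_f[OF psi_surj])

lemma phi_hlin: "hlin sB sB phi"
  unfolding hlin_def
proof (intro allI)
  fix f x y
  have "hmul sB f x + y = psi (hmul sB f (phi x) + phi y)"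
    by (simp add: psi_add psi_hmul)
  then show "phi (hmul sB f x + y) = hmul sB f (phi x) + phi y" by simp
qed

lemma phi_Y: "phi (YW u n w) = hY Y0 u n (phi w)"
proof -
  have "YW u n w = psi (hY Y0 u n (phi w))" by (simp add: psi_Y)
  then show ?thesis by simp
qed

lemma iso: "hiso sB YW (hY Y0) phi"
  unfolding hiso_def using phi_hlin phi_Y bij_imp_bij_inv[OF psi_bij] by (simp add: phi_def)

lemma simple0:
  assumes simple: "hsimple sB YW"
  shows "vsimple sB UNIV Y0"
  unfolding vsimple_def
proof (intro conjI allI impI)
  have "(UNIV :: (nat \<Rightarrow> 'b) set) \<noteq> {0}" using simple by (simp add: hsimple_def)
  then obtain x :: "nat \<Rightarrow> 'b" where "x \<noteq> 0" by auto
  then obtain i where "x i \<noteq> 0" by (auto simp: fun_eq_iff)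
  then show "(UNIV :: 'b set) \<noteq> {0}" by auto
next
  fix N assume vsN: "vsubmod sB UNIV Y0 N"
  have mB: "module sB" by (rule vs_module[OF vsB])
  have subN: "module.subspace sB N" and stN: "\<And>u n w. w \<in> N \<Longrightarrow> Y0 u n w \<in> N"
    using vsN unfolding vsubmod_def by blast+
  have N0: "0 \<in> N" by (rule module.subspace_0[OF mB subN])
  have phi_add: "additive phi" by (rule hlin_additive[OF vsB vsB phi_hlin])
  define S where "S = {w. \<forall>i. phi w i \<in> N}"
  have "hsubmod sB YW S"
    unfolding hsubmod_def
  proof (intro conjI ballI allI)
    show "0 \<in> S" unfolding S_def using N0 additive.zero[OF phi_add] by simp
  next
    fix x y assume "x \<in> S" "y \<in> S"
    then show "x + y \<in> S" unfolding S_def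
      using module.subspace_add[OF mB subN] by (simp add: additive.add[OF phi_add])
  next
    fix f x assume "x \<in> S"
    moreover have "phi (hmul sB f x) = hmul sB f (phi x)" by (rule hlin_hmul[OF vsB vsB phi_hlin])
    ultimately show "hmul sB f x \<in> S" unfolding S_def
      by (auto simp: hmul_def
          intro!: module.subspace_sum[OF mB subN] module.subspace_scale[OF mB subN])
  next
    fix u n x assume "x \<in> S"
    then show "YW u n x \<in> S" unfolding S_def
      by (auto simp: phi_Y hY_def intro!: module.subspace_sum[OF mB subN] stN)
  next
    show "hclosed S" unfolding hclosed_def
    proof (intro allI impI)
      fix x assume a: "\<forall>k. \<exists>y\<in>S. inhk k (x - y)"
      show "x \<in> S" unfolding S_def mem_Collect_eq
      proof
        fix i
        obtain y where y: "y \<in> S" "inhk (Suc i) (x - y)" using a by blast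
        have "phi x i = phi y i"
          by (rule hlin_causal[OF vsB vsB phi_hlin]) (use y(2) in \<open>auto simp: inhk_def\<close>)
        then show "phi x i \<in> N" using y(1) unfolding S_def by simp
      qed
    qed
  next
    show "hsat S" unfolding hsat_def
    proof (intro allI impI)
      fix x n assume a: "1 \<le> n \<and> hpow n x \<in> S"
      show "x \<in> S" unfolding S_def mem_Collect_eq
      proof
        fix i
        have "hpow n (phi x) (i + n) \<in> N" using a unfolding S_def
          by (simp add: hlin_hpow[OF vsB vsB phi_hlin, symmetric])
        then show "phi x i \<in> N" by (simp add: hpow_def)
      qed
    qed
  qed
  then have "S = {0} \<or> S = UNIV" using simple unfolding hsimple_def by blast
  then show "N = {0} \<or> N = UNIV"
  proof
    assume S0: "S = {0}"
    have "b = 0" if "b \<in> N" for b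
    proof -
      have "psi (hvac b) \<in> S" unfolding S_def using that N0 by (simp add: hvac_def)
      then have "psi (hvac b) = psi 0" using S0 additive.zero[OF psi_additive] by simp
      then have "hvac b = 0" using psi_inj by (simp add: inj_eq)
      then show "b = 0" by (metis hvac_0 zero_fun_def)
    qed
    then show ?thesis using N0 by blast
  next
    assume "S = UNIV"
    then have "b \<in> N" for b
      using phi_psi[of "hvac b"] unfolding S_def by (metis UNIV_I mem_Collect_eq hvac_0)
    then show ?thesis by blast
  qed
qed

lemma main:
  assumes "hsimple sB YW"
  shows "\<exists>Y0'.
           nlva_module sc vac Y sB UNIV Y0' \<and> vsimple sB UNIV Y0' \<and>
           (\<exists>\<phi>. hiso sB YW (hY Y0') \<phi>)"
  using Y0_module simple0[OF assms] iso by blast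

end

theorem lemma3p5:
  fixes sc :: "complex \<Rightarrow> 'v::ab_group_add \<Rightarrow> 'v" and vac :: 'v
    and Y :: "'v \<Rightarrow> int \<Rightarrow> 'v \<Rightarrow> 'v"
    and sB :: "complex \<Rightarrow> 'b::ab_group_add \<Rightarrow> 'b"
    and YW :: "(nat \<Rightarrow> 'v) \<Rightarrow> int \<Rightarrow> (nat \<Rightarrow> 'b) \<Rightarrow> (nat \<Rightarrow> 'b)"
  assumes V0: "nlva sc vac Y"
    and cr: "\<forall>(M :: (nat \<Rightarrow> 'b) set) YM. nlva_module sc vac Y (pscale sB) M YM
               \<longrightarrow> compl_red (pscale sB) M YM"
    and W: "hmodule sc vac Y sB YW"
    and simple: "hsimple sB YW"
  shows "\<exists>Y0 :: 'v \<Rightarrow> int \<Rightarrow> 'b \<Rightarrow> 'b.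
           nlva_module sc vac Y sB UNIV Y0 \<and> vsimple sB UNIV Y0 \<and>
           (\<exists>\<phi>. hiso sB YW (hY Y0) \<phi>)"
proof -
  interpret hset2 sc vac Y sB YW
    using V0 W cr by (simp add: hset2_def hset_def hset2_axioms_def)
  show ?thesis by (rule main[OF simple])
qed


end
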